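(* Consider the full binary tree network with levels $0,1,\dots,9$ (root at level $0$, $512$ leaves at level $9$, $N=2^{10}-1$ nodes), in which every node at level $s<9$ owes $\$2^{10-s}$ to each of its two children, leaves owe nothing, and $\mathbf e=\mathbf 0$. For a cash injection $\mathbf c\ge \mathbf 0$, let $N_d(\mathbf c)$ be the number of nodes $i$ with $p_i<\bar p_i$, where $\mathbf p$ is the clearing payment vector. Then: if $C\ge 2048$, the minimum of $N_d(\mathbf c)$ over $\mathbf c\ge\mathbf 0$ with $\mathbf 1^T\mathbf c=C$ is $0$; and if $C$ is an integer with $0\le C<2048$ with binary expansion $C=\sum_{u\ge 0} b(u)2^u$, $b(u)\in\{0,1\}$, this minimum equals \[ 511-\sum_{u= 3}^{10} b(u)\,(2^{u-2}-1). \]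
   Context: Financial network model: $L_{ij}\ge 0$ is the amount node $i$ owes node $j$; $\bar p_i=\sum_j L_{ij}$; $\Pi_{ij}=L_{ij}/\bar p_i$ if $\bar p_i\ne0$, else $0$. Given cash on hand $\mathbf e$ and injection $\mathbf c$, the clearing payment vector is the (here unique) $\mathbf p$ with $\mathbf p=\min(\bar{\mathbf p},\Pi^T\mathbf p+\mathbf e+\mathbf c)$ componentwise: each node pays its liabilities in full if its funds (received payments plus $e_i+c_i$) suffice, otherwise pays all its funds, split among creditors in proportion to amounts owed. A node $i$ is in default if $p_i<\bar p_i$. *)

theory Defs
  imports Complex_Main
begin

text \<open>Nodes form a finite set V; L i j is the amount node i owes node j.\<close>

definition pbar :: "'a set \<Rightarrow> ('a \<Rightarrow> 'a \<Rightarrow> real) \<Rightarrow> 'a \<Rightarrow> real" where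
  "pbar V L i = (\<Sum>j\<in>V. L i j)"

definition relliab :: "'a set \<Rightarrow> ('a \<Rightarrow> 'a \<Rightarrow> real) \<Rightarrow> 'a \<Rightarrow> 'a \<Rightarrow> real" where
  "relliab V L i j = (if pbar V L i \<noteq> 0 then L i j / pbar V L i else 0)"

definition is_clearing ::
  "'a set \<Rightarrow> ('a \<Rightarrow> 'a \<Rightarrow> real) \<Rightarrow> ('a \<Rightarrow> real) \<Rightarrow> ('a \<Rightarrow> real) \<Rightarrow> ('a \<Rightarrow> real) \<Rightarrow> bool" where
  "is_clearing V L e c p \<longleftrightarrow>
     (\<forall>i\<in>V. p i = min (pbar V L i) ((\<Sum>j\<in>V. relliab V L j i * p j) + e i + c i)) \<and>
     (\<forall>i. i \<notin> V \<longrightarrow> p i = 0)"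

definition clearing_vector ::
  "'a set \<Rightarrow> ('a \<Rightarrow> 'a \<Rightarrow> real) \<Rightarrow> ('a \<Rightarrow> real) \<Rightarrow> ('a \<Rightarrow> real) \<Rightarrow> 'a \<Rightarrow> real" where
  "clearing_vector V L e c = (THE p. is_clearing V L e c p)"

definition num_defaults ::
  "'a set \<Rightarrow> ('a \<Rightarrow> 'a \<Rightarrow> real) \<Rightarrow> ('a \<Rightarrow> real) \<Rightarrow> ('a \<Rightarrow> real) \<Rightarrow> nat" where
  "num_defaults V L e c =
     card {i\<in>V. clearing_vector V L e c i < pbar V L i}"

text \<open>Heap indexing: nodes 1..1023, root 1, children of i are 2i and 2i+1;
  node i is at level s iff 2^s \<le> i < 2^(s+1).\<close>

definition tree_nodes :: "nat set" where
  "tree_nodes = {1..1023}"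

definition level :: "nat \<Rightarrow> nat" where
  "level i = (THE s. 2^s \<le> i \<and> i < 2^(Suc s))"

definition tree_L :: "nat \<Rightarrow> nat \<Rightarrow> real" where
  "tree_L i j = (if i \<in> tree_nodes \<and> level i < 9 \<and> (j = 2*i \<or> j = 2*i+1)
                 then 2 ^ (10 - level i) else 0)"

definition tree_Nd :: "(nat \<Rightarrow> real) \<Rightarrow> nat" where
  "tree_Nd c = num_defaults tree_nodes tree_L (\<lambda>_. 0) c"

definition admissible_injections :: "real \<Rightarrow> (nat \<Rightarrow> real) set" where
  "admissible_injections C =
     {c. (\<forall>i\<in>tree_nodes. c i \<ge> 0) \<and> (\<Sum>i\<in>tree_nodes. c i) = C}"

definition min_defaults_is :: "real \<Rightarrow> nat \<Rightarrow> bool" where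
  "min_defaults_is C m \<longleftrightarrow>
     (\<exists>c\<in>admissible_injections C. tree_Nd c = m) \<and>
     (\<forall>c\<in>admissible_injections C. m \<le> tree_Nd c)"

end

theory Submission
  imports Defs
begin


abbreviation "V \<equiv> tree_nodes"
abbreviation "P \<equiv> pbar tree_nodes tree_L"

lemma lvl_ex: "1 \<le> (i::nat) \<Longrightarrow> \<exists>s. 2^s \<le> i \<and> i < 2^(Suc s)"
proof (induction i)
  case 0 then show ?case by simp
next
  case (Suc i)
  show ?case
  proof (cases "i = 0")
    case True then show ?thesis by (rule_tac x=0 in exI) simp
  next
    case False
    then obtain s where s: "2^s \<le> i" "i < 2^(Suc s)" using Suc by auto
    show ?thesis
    proof (cases "Suc i < 2^(Suc s)")
      case True then show ?thesis using s by (rule_tac x=s in exI) simp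
    next
      case False
      then have "Suc i = 2^(Suc s)" using s by simp
      then show ?thesis by (rule_tac x="Suc s" in exI) simp
    qed
  qed
qed

lemma lvl_eq: assumes "2^s \<le> (i::nat)" "i < 2^(Suc s)" shows "level i = s"
  unfolding level_def
proof (rule the_equality)
  show "2^s \<le> i \<and> i < 2^(Suc s)" using assms by simp
next
  fix t assume t: "2^t \<le> i \<and> i < 2^(Suc t)"
  show "t = s"
  proof (rule ccontr)
    assume "t \<noteq> s"
    then have "t < s \<or> s < t" by arith
    then show False
    proof
      assume "t < s" then have "2^(Suc t) \<le> (2::nat)^s" by (intro power_increasing) auto
      then show False using t assms by simp
    next
      assume "s < t" then have "2^(Suc s) \<le> (2::nat)^t" by (intro power_increasing) auto
      then show False using t assms by simp
    qed
  qed
qed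

lemma lvl_lt9: assumes "1 \<le> i" shows "level i < 9 \<longleftrightarrow> i < 512"
proof -
  obtain s where s: "2^s \<le> i" "i < 2^(Suc s)" using lvl_ex[OF assms] by auto
  have l: "level i = s" using lvl_eq[OF s] .
  show ?thesis
  proof
    assume "level i < 9"
    then have "Suc s \<le> 9" using l by simp
    then have "(2::nat)^(Suc s) \<le> 2^9" by (intro power_increasing) auto
    then show "i < 512" using s by simp
  next
    assume "i < 512"
    show "level i < 9"
    proof (rule ccontr)
      assume "\<not> level i < 9"
      then have "9 \<le> s" using l by simp
      then have "(2::nat)^9 \<le> 2^s" by (intro power_increasing) auto
      then show False using s \<open>i < 512\<close> by simp
    qed
  qed
qed

lemma V_iff: "i \<in> V \<longleftrightarrow> 1 \<le> i \<and> i \<le> 1023" by (auto simp: tree_nodes_def)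

lemma tree_L_eq: "tree_L i j = (if i \<in> V \<and> i < 512 \<and> (j = 2*i \<or> j = 2*i+1) then 2^(10 - level i) else 0)"
  unfolding tree_L_def tree_nodes_def using lvl_lt9[of i] by auto

lemma P_eq: "P i = (if i \<in> V \<and> i < 512 then 2 * 2^(10 - level i) else 0)"
proof (cases "i \<in> V \<and> i < 512")
  case True
  have "P i = (\<Sum>j\<in>V. (if j = 2*i then 2^(10 - level i) else 0) + (if j = 2*i+1 then 2^(10 - level i) else 0))"
    unfolding pbar_def by (rule sum.cong) (auto simp: tree_L_eq True)
  also have "\<dots> = 2 * 2^(10 - level i)"
    using True by (simp add: sum.distrib tree_nodes_def)
  finally show ?thesis using True by simp
next
  case False
  have "P i = (\<Sum>j\<in>V. 0)"
    unfolding pbar_def by (rule sum.cong) (use False in \<open>auto simp: tree_L_eq\<close>)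
  then show ?thesis using False by simp
qed

lemma P_lvl: assumes "2^s \<le> i" "i < 2^(Suc s)" "s \<le> 9"
  shows "P i = (if s < 9 then 2 * 2^(10 - s) else 0)"
proof -
  have "1 \<le> i" using assms(1) by (metis one_le_numeral one_le_power order_trans)
  have "(2::nat)^(Suc s) \<le> 2^10" using assms(3) by (intro power_increasing) auto
  then have "i \<in> V" using assms \<open>1 \<le> i\<close> by (simp add: tree_nodes_def)
  show ?thesis using P_eq[of i] lvl_eq[OF assms(1,2)] lvl_lt9[OF \<open>1 \<le> i\<close>] \<open>i \<in> V\<close> by auto
qed

lemma P_nonneg: "0 \<le> P i" by (simp add: P_eq)

lemma relliab_eq: assumes "j \<in> V"
  shows "relliab V tree_L j i = (if j < 512 \<and> (i = 2*j \<or> i = 2*j+1) then 1/2 else 0)"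
  using assms unfolding relliab_def by (auto simp: P_eq tree_L_eq)

lemma flow_eq: assumes "i \<in> V"
  shows "(\<Sum>j\<in>V. relliab V tree_L j i * p j) = (if 2 \<le> i then p (i div 2) / 2 else 0)"
proof -
  have "(\<Sum>j\<in>V. relliab V tree_L j i * p j) = (\<Sum>j\<in>V. if j = i div 2 then (if 2 \<le> i then p j / 2 else 0) else 0)"
  proof (rule sum.cong)
    fix j assume j: "j \<in> V"
    have r: "relliab V tree_L j i = (if j < 512 \<and> (i = 2*j \<or> i = 2*j+1) then 1/2 else 0)"
      by (rule relliab_eq[OF j])
    have jb: "1 \<le> j" "j \<le> 1023" "1 \<le> i" "i \<le> 1023" using j assms by (auto simp: tree_nodes_def)
    show "relliab V tree_L j i * p j = (if j = i div 2 then (if 2 \<le> i then p j / 2 else 0) else 0)"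
    proof (cases "j = i div 2")
      case True
      then have "j < 512" "i = 2*j \<or> i = 2*j+1" "2 \<le> i" using jb by auto
      then show ?thesis using r True by simp
    next
      case False
      then have "\<not> (i = 2*j \<or> i = 2*j+1)" by auto
      then show ?thesis using r False by simp
    qed
  qed simp
  also have "\<dots> = (if 2 \<le> i then p (i div 2) / 2 else 0)"
    using assms by (auto simp: tree_nodes_def)
  finally show ?thesis .
qed



function qf :: "(nat \<Rightarrow> real) \<Rightarrow> nat \<Rightarrow> real" where
  "qf c i = (if i = 0 \<or> 1023 < i then 0 else if i = 1 then min (P 1) (c 1)
             else min (P i) (qf c (i div 2) / 2 + c i))"
  by auto
termination by (relation "measure (\<lambda>(c,i). i)") auto

declare qf.simps[simp del]

lemma qf_clearing: "is_clearing V tree_L (\<lambda>_. 0) c (qf c)"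
  unfolding is_clearing_def
proof (intro conjI ballI allI impI)
  fix i assume i: "i \<in> V"
  have f: "(\<Sum>j\<in>V. relliab V tree_L j i * qf c j) = (if 2 \<le> i then qf c (i div 2) / 2 else 0)"
    by (rule flow_eq[OF i])
  show "qf c i = min (P i) ((\<Sum>j\<in>V. relliab V tree_L j i * qf c j) + 0 + c i)"
    unfolding f using i by (subst qf.simps) (auto simp: V_iff)
next
  fix i assume "i \<notin> V" then show "qf c i = 0" by (subst qf.simps) (auto simp: V_iff)
qed

lemma clearing_unique: assumes "is_clearing V tree_L (\<lambda>_. 0) c p" shows "p i = qf c i"
proof (induction i rule: less_induct)
  case (less i)
  have A1: "\<And>i. i \<in> V \<Longrightarrow> p i = min (P i) ((\<Sum>j\<in>V. relliab V tree_L j i * p j) + 0 + c i)"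
    and A2: "\<And>i. i \<notin> V \<Longrightarrow> p i = 0" using assms unfolding is_clearing_def by blast+
  show ?case
  proof (cases "i \<in> V")
    case False
    then have "qf c i = 0" by (subst qf.simps) (auto simp: V_iff)
    then show ?thesis using A2[OF False] by simp
  next
    case True
    then have "p i = min (P i) ((\<Sum>j\<in>V. relliab V tree_L j i * p j) + 0 + c i)"
      by (rule A1)
    also have "\<dots> = min (P i) ((if 2 \<le> i then p (i div 2) / 2 else 0) + c i)"
      using flow_eq[OF True, of p] by simp
    also have "\<dots> = qf c i"
    proof (cases "2 \<le> i")
      case True
      then have "p (i div 2) = qf c (i div 2)" using less by simp
      moreover have "qf c i = min (P i) (qf c (i div 2) / 2 + c i)"
        using True \<open>i \<in> V\<close> by (subst qf.simps) (simp add: V_iff)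
      ultimately show ?thesis using True by simp
    next
      case False
      then have "i = 1" using \<open>i \<in> V\<close> by (simp add: V_iff)
      moreover have "qf c 1 = min (P 1) (c 1)" by (subst qf.simps) simp
      ultimately show ?thesis by simp
    qed
    finally show ?thesis .
  qed
qed

lemma cv_eq: "clearing_vector V tree_L (\<lambda>_. 0) c = qf c"
  unfolding clearing_vector_def
proof (rule the_equality)
  show "is_clearing V tree_L (\<lambda>_. 0) c (qf c)" by (rule qf_clearing)
next
  fix p assume "is_clearing V tree_L (\<lambda>_. 0) c p"
  then show "p = qf c" by (intro ext clearing_unique)
qed

lemma qf_nonneg: assumes "\<forall>j\<in>V. 0 \<le> c j" shows "0 \<le> qf c i"
proof (induction i rule: less_induct)
  case (less i)
  show ?case
  proof (cases "i = 0 \<or> 1023 < i")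
    case True then show ?thesis by (subst qf.simps) simp
  next
    case F: False
    then have ci: "0 \<le> c i" using assms by (simp add: V_iff)
    show ?thesis
    proof (cases "i = 1")
      case True then show ?thesis using ci P_nonneg[of 1] by (subst qf.simps) simp
    next
      case False
      then have "0 \<le> qf c (i div 2)" using less F by simp
      then show ?thesis using F False ci P_nonneg[of i] by (subst qf.simps) simp
    qed
  qed
qed

definition infl :: "(nat \<Rightarrow> real) \<Rightarrow> nat \<Rightarrow> real" where
  "infl c i = (if i = 1 then 0 else qf c (i div 2) / 2)"

lemma qf_infl: assumes "1 \<le> i" "i \<le> 1023" shows "qf c i = min (P i) (infl c i + c i)"
  using assms by (subst qf.simps) (auto simp: infl_def)

lemma infl_nonneg: assumes "\<forall>j\<in>V. 0 \<le> c j" shows "0 \<le> infl c i"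
  using qf_nonneg[OF assms] by (simp add: infl_def)

lemma qf_0[simp]: "qf c 0 = 0" by (subst qf.simps) simp

lemma infl_child: "infl c (2*i) = qf c i / 2" "infl c (2*i+1) = qf c i / 2"
  unfolding infl_def by simp_all


fun pc :: "nat \<Rightarrow> nat" where
  "pc n = (if n = 0 then 0 else n mod 2 + pc (n div 2))"
declare pc.simps[simp del]

lemma pc_eq: "pc n = n mod 2 + pc (n div 2)"
  by (subst pc.simps) (auto simp: pc.simps[of 0])

lemma pc_0[simp]: "pc 0 = 0" by (simp add: pc.simps)
lemma pc_1[simp]: "pc (Suc 0) = Suc 0" by (subst pc_eq) simp

lemma pc_2: assumes "b < 2" shows "pc (2*a + b) = b + pc a"
proof -
  have "(2*a+b) mod 2 = b" "(2*a+b) div 2 = a" using assms by auto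
  then show ?thesis using pc_eq[of "2*a+b"] by simp
qed

lemma pc_sub: "c \<le> 1 \<Longrightarrow> pc (a+b+c) \<le> pc a + pc b + c"
proof (induction "a+b" arbitrary: a b c rule: less_induct)
  case less
  show ?case
  proof (cases "a + b = 0")
    case True then show ?thesis using less.prems by (cases c) auto
  next
    case False
    define a' where "a' = a div 2"
    define x where "x = a mod 2"
    define b' where "b' = b div 2"
    define y where "y = b mod 2"
    have a: "a = 2*a' + x" and b: "b = 2*b'+y" and xy: "x \<le> 1" "y \<le> 1"
      unfolding a'_def x_def b'_def y_def by auto
    have lt: "a' + b' < a + b" using False a b by auto
    have pa: "pc a = x + pc a'" using pc_eq[of a] a'_def x_def by simp
    have pb: "pc b = y + pc b'" using pc_eq[of b] b'_def y_def by simp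
    show ?thesis
    proof (cases "x + y + c < 2")
      case True
      have e: "a + b + c = 2*(a'+b'+0) + (x+y+c)" using a b by simp
      have "pc (a+b+c) = (x+y+c) + pc (a'+b'+0)"
        unfolding e by (rule pc_2[OF True])
      also have "\<dots> \<le> (x+y+c) + (pc a' + pc b' + 0)"
        using less.hyps[OF lt, of 0] by simp
      finally show ?thesis using pa pb by simp
    next
      case False
      have e: "a + b + c = 2*(a'+b'+1) + (x+y+c-2)" using a b False by simp
      have "pc (a+b+c) = (x+y+c-2) + pc (a'+b'+1)"
        unfolding e using False xy less.prems by (intro pc_2) simp
      also have "\<dots> \<le> (x+y+c-2) + (pc a' + pc b' + 1)"
        using less.hyps[OF lt, of 1] by simp
      finally show ?thesis using pa pb False by simp
    qed
  qed
qed

lemma pc_add: "pc (a+b) \<le> pc a + pc b" using pc_sub[of 0 a b] by simp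

lemma pc_pow: "r < 2^k \<Longrightarrow> pc (2^k + r) = 1 + pc r"
proof (induction k arbitrary: r)
  case 0 then show ?case by simp
next
  case (Suc k)
  have d: "(2^(Suc k) + r) div 2 = 2^k + r div 2" "(2^(Suc k) + r) mod 2 = r mod 2" by auto
  have "r div 2 < 2^k" using Suc.prems by auto
  then show ?case using pc_eq[of "2^(Suc k) + r"] pc_eq[of r] d Suc.IH by simp
qed

lemma pc_le: "pc n \<le> n"
proof (induction n rule: less_induct)
  case (less n)
  show ?case
  proof (cases "n = 0")
    case False
    then have "pc (n div 2) \<le> n div 2" using less by simp
    moreover have "n mod 2 + n div 2 \<le> n" by simp
    ultimately show ?thesis using pc_eq[of n] by linarith
  qed simp
qed

definition G :: "nat \<Rightarrow> int" where "G m = 2 * int m - int (pc m)"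

lemma G_nonneg: "0 \<le> G m" using pc_le[of m] by (simp add: G_def)
lemma G_0[simp]: "G 0 = 0" by (simp add: G_def)
lemma G_pow: "G (2^n) = 2 * 2^n - 1" using pc_pow[of 0 n] by (simp add: G_def)
lemma G_superadd: "G a + G b \<le> G (a+b)" using pc_add[of a b] by (simp add: G_def)
lemma G_mono: assumes "a \<le> b" shows "G a \<le> G b"
proof -
  obtain d where "b = a + d" using assms le_Suc_ex by blast
  then show ?thesis using G_superadd[of a d] G_nonneg[of d] by simp
qed
lemma G_pow_add: "r < 2^k \<Longrightarrow> G (2^k + r) = G (2^k) + G r"
  using pc_pow[of r k] pc_pow[of 0 k] by (simp add: G_def)

definition Phi :: "real \<Rightarrow> int" where "Phi x = G (nat \<lfloor>x/8\<rfloor>)"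

lemma Phi_nonneg: "0 \<le> Phi x" by (simp add: Phi_def G_nonneg)
lemma Phi_mono: "x \<le> y \<Longrightarrow> Phi x \<le> Phi y"
  unfolding Phi_def by (intro G_mono nat_mono floor_mono) (simp add: divide_right_mono)
lemma Phi_superadd: assumes "0 \<le> x" "0 \<le> y" shows "Phi x + Phi y \<le> Phi (x+y)"
proof -
  have "\<lfloor>x/8\<rfloor> + \<lfloor>y/8\<rfloor> \<le> \<lfloor>x/8 + y/8\<rfloor>" by (rule le_floor_add)
  moreover have "0 \<le> \<lfloor>x/8\<rfloor>" "0 \<le> \<lfloor>y/8\<rfloor>" using assms by auto
  ultimately have "nat \<lfloor>x/8\<rfloor> + nat \<lfloor>y/8\<rfloor> \<le> nat \<lfloor>(x+y)/8\<rfloor>" by (simp add: add_divide_distrib nat_add_distrib[symmetric] nat_mono)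
  then show ?thesis unfolding Phi_def using G_superadd G_mono by (meson order_trans)
qed
lemma Phi_pow: "Phi (2^(n+3)) = 2 * 2^n - 1"
proof -
  have "(2::real)^(n+3)/8 = 2^n" by (simp add: power_add)
  then have "\<lfloor>(2::real)^(n+3)/8\<rfloor> = 2^n" by simp
  then show ?thesis unfolding Phi_def by (simp add: nat_power_eq G_pow)
qed



fun T :: "nat \<Rightarrow> nat \<Rightarrow> nat set" where
  "T 0 i = {}"
| "T (Suc n) i = insert i (T n (2*i) \<union> T n (2*i+1))"

lemma T_finite[simp]: "finite (T n i)"
  by (induction n arbitrary: i) auto

lemma T_ge: "j \<in> T n i \<Longrightarrow> i \<le> j"
  by (induction n arbitrary: i) force+

lemma T_div: "j \<in> T n i \<Longrightarrow> \<exists>k<n. j div 2^k = i"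
proof (induction n arbitrary: i)
  case 0 then show ?case by simp
next
  case (Suc n)
  show ?case
  proof (cases "j = i")
    case True then show ?thesis by (rule_tac x=0 in exI) simp
  next
    case False
    then have "j \<in> T n (2*i) \<or> j \<in> T n (2*i+1)" using Suc.prems by simp
    then show ?thesis
    proof
      assume "j \<in> T n (2*i)"
      then obtain k where "k < n" "j div 2^k = 2*i" using Suc.IH by blast
      moreover have "j div 2^(Suc k) = (j div 2^k) div 2" by (simp only: power_Suc2 div_mult2_eq)
      ultimately have "j div 2^(Suc k) = i" by simp
      then show ?thesis using \<open>k < n\<close> by (rule_tac x="Suc k" in exI) simp
    next
      assume "j \<in> T n (2*i+1)"
      then obtain k where "k < n" "j div 2^k = 2*i+1" using Suc.IH by blast
      moreover have "j div 2^(Suc k) = (j div 2^k) div 2" by (simp only: power_Suc2 div_mult2_eq)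
      ultimately have "j div 2^(Suc k) = i" by simp
      then show ?thesis using \<open>k < n\<close> by (rule_tac x="Suc k" in exI) simp
    qed
  qed
qed

lemma div_pow_le: assumes "1 \<le> d" shows "a div 2^d \<le> (a::nat) div 2"
proof -
  have "(2::nat) \<le> 2^d" using assms by (metis power_increasing power_one_right zero_less_numeral nat_le_linear less_numeral_extra(3) one_le_numeral)
  then show ?thesis using div_le_mono2[of 2 "2^d" a] by simp
qed

lemma div_div_pow: "k \<le> k' \<Longrightarrow> (j::nat) div 2^k' = (j div 2^k) div 2^(k'-k)"
  by (metis div_mult2_eq le_add_diff_inverse power_add)

lemma T_disj: assumes "1 \<le> i" shows "T n (2*i) \<inter> T n (2*i+1) = {}"
proof (rule ccontr)
  assume "T n (2*i) \<inter> T n (2*i+1) \<noteq> {}"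
  then obtain j where j: "j \<in> T n (2*i)" "j \<in> T n (2*i+1)" by blast
  obtain k where k: "j div 2^k = 2*i" using T_div[OF j(1)] by blast
  obtain k' where k': "j div 2^k' = 2*i+1" using T_div[OF j(2)] by blast
  consider "k = k'" | "k < k'" | "k' < k" by arith
  then show False
  proof cases
    case 1 then show ?thesis using k k' by simp
  next
    case 2
    then have "j div 2^k' = (2*i) div 2^(k'-k)" using div_div_pow[of k k' j] k by simp
    also have "\<dots> \<le> (2*i) div 2" using 2 by (intro div_pow_le) simp
    finally show ?thesis using k' by simp
  next
    case 3
    then have "j div 2^k = (2*i+1) div 2^(k-k')" using div_div_pow[of k' k j] k' by simp
    also have "\<dots> \<le> (2*i+1) div 2" using 3 by (intro div_pow_le) simp
    finally show ?thesis using k assms by simp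
  qed
qed

lemma T_notin: "1 \<le> i \<Longrightarrow> i \<notin> T n (2*i) \<union> T n (2*i+1)"
  using T_ge[of i n "2*i"] T_ge[of i n "2*i+1"] by auto

lemma T_card: "1 \<le> i \<Longrightarrow> card (T n i) = 2^n - 1"
proof (induction n arbitrary: i)
  case 0 then show ?case by simp
next
  case (Suc n)
  have "card (T (Suc n) i) = Suc (card (T n (2*i) \<union> T n (2*i+1)))"
    using T_notin[OF Suc.prems, of n] by simp
  also have "\<dots> = Suc (card (T n (2*i)) + card (T n (2*i+1)))"
    using T_disj[OF Suc.prems, of n] by (simp add: card_Un_disjoint)
  also have "\<dots> = Suc (2 * (2^n - 1))" using Suc.IH[of "2*i"] Suc.IH[of "2*i+1"] Suc.prems by simp
  also have "\<dots> = 2^(Suc n) - 1"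
  proof -
    have "0 < (2::nat)^n" by simp
    then obtain x where "(2::nat)^n = Suc x" using gr0_implies_Suc by blast
    then show ?thesis by simp
  qed
  finally show ?case .
qed

definition lv :: "nat \<Rightarrow> nat \<Rightarrow> bool" where
  "lv n i \<longleftrightarrow> n \<le> 9 \<and> 2^(9-n) \<le> i \<and> i < 2^(10-n)"

lemma lv_child: assumes "lv (Suc n) i" shows "lv n (2*i)" "lv n (2*i+1)"
proof -
  have n: "n \<le> 8" and a: "2^(8-n) \<le> i" and b: "i < 2^(9-n)" using assms by (auto simp: lv_def)
  have "9 - n = Suc (8-n)" "10 - n = Suc (9 - n)" using n by auto
  then have e1: "(2::nat)^(9-n) = 2 * 2^(8-n)" and e2: "(2::nat)^(10-n) = 2 * 2^(9-n)" by simp_all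
  show "lv n (2*i)" "lv n (2*i+1)" unfolding lv_def using n a b e1 e2 by auto
qed

lemma lv_ge1: "lv n i \<Longrightarrow> 1 \<le> i"
  unfolding lv_def by (metis one_le_numeral one_le_power order_trans)

lemma lv_le: assumes "lv (Suc n) i" shows "i \<le> 511"
proof -
  have "(2::nat)^(10 - Suc n) \<le> 2^9" by (intro power_increasing) auto
  then show ?thesis using assms unfolding lv_def by simp
qed

lemma lv_le': assumes "lv n i" shows "i \<le> 1023"
proof -
  have "(2::nat)^(10 - n) \<le> 2^10" by (intro power_increasing) auto
  then show ?thesis using assms unfolding lv_def by simp
qed

lemma P_lv: assumes "lv (Suc n) i" shows "P i = 2^(n+3)"
proof -
  have n: "n \<le> 8" and a: "2^(8-n) \<le> i" and b0: "i < 2^(9-n)" using assms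
    by (auto simp: lv_def)
  have "9 - n = Suc (8-n)" using n by simp
  then have b: "i < 2^(Suc (8-n))" using b0 by simp
  have "P i = 2 * 2^(10 - (8-n))" using P_lvl[OF a b] n by simp
  also have "10 - (8-n) = n + 2" using n by simp
  finally show ?thesis by (simp add: power_add)
qed

lemma T_range: "lv n i \<Longrightarrow> j \<in> T n i \<Longrightarrow> 1 \<le> j \<and> j \<le> 511"
proof (induction n arbitrary: i)
  case 0 then show ?case by simp
next
  case (Suc n)
  show ?case
  proof (cases "j = i")
    case True then show ?thesis using lv_ge1[OF Suc.prems(1)] lv_le[OF Suc.prems(1)] by simp
  next
    case False
    then show ?thesis using Suc.prems lv_child[OF Suc.prems(1)] Suc.IH by auto
  qed
qed

lemma T_V: assumes "lv n i" shows "T n i \<subseteq> V"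
proof
  fix j assume "j \<in> T n i"
  note assms this
  then show "j \<in> V" using T_range[of n i j] by (simp add: V_iff)
qed

lemma T91: "T 9 1 = {1..511}"
proof (rule card_subset_eq)
  have "lv 9 1" by (simp add: lv_def)
  then show "T 9 1 \<subseteq> {1..511}" using T_range by auto
  show "card (T 9 1) = card {1..(511::nat)}" using T_card[of 1 9] by simp
qed simp

lemma allsolv: assumes c: "\<forall>j\<in>V. 0 \<le> c j"
  shows "lv n i \<Longrightarrow> qf c i = P i \<Longrightarrow> j \<in> T n i \<Longrightarrow> qf c j = P j"
proof (induction n arbitrary: i)
  case 0 then show ?case by simp
next
  case (Suc n)
  show ?case
  proof (cases "j = i")
    case True then show ?thesis using Suc.prems by simp
  next
    case False
    then have jin: "j \<in> T n (2*i) \<or> j \<in> T n (2*i+1)" using Suc.prems by simp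
    then obtain n' where n': "n = Suc n'" by (cases n) auto
    have Pi: "P i = 2^(n'+4)" using P_lv[OF Suc.prems(1)] n' by simp
    have ch: "qf c k = P k" if k: "k = 2*i \<or> k = 2*i+1" for k
    proof -
      have lk: "lv (Suc n') k" using lv_child[OF Suc.prems(1)] k n' by auto
      have Pk: "P k = 2^(n'+3)" using P_lv[OF lk] .
      have ck: "0 \<le> c k" using c lv_ge1[OF lk] lv_le'[OF lk] by (simp add: V_iff)
      have "infl c k = qf c i / 2" using k infl_child by auto
      then have "infl c k = 2^(n'+4) / 2" using Suc.prems(2) Pi by simp
      also have "(2::real)^(n'+4) / 2 = 2^(n'+3)" by (simp add: power_add)
      finally have "infl c k = 2^(n'+3)" .
      then show ?thesis using qf_infl[OF lv_ge1[OF lk] lv_le'[OF lk]] Pk ck by simp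
    qed
    show ?thesis using jin
    proof
      assume "j \<in> T n (2*i)" then show ?thesis using Suc.IH[of "2*i"] lv_child[OF Suc.prems(1)] ch by blast
    next
      assume "j \<in> T n (2*i+1)" then show ?thesis using Suc.IH[of "2*i+1"] lv_child[OF Suc.prems(1)] ch by blast
    qed
  qed
qed



lemma T_split_sum: fixes f :: "nat \<Rightarrow> real" assumes "1 \<le> i"
  shows "(\<Sum>j\<in>T (Suc n) i. f j) = f i + (\<Sum>j\<in>T n (2*i). f j) + (\<Sum>j\<in>T n (2*i+1). f j)"
proof -
  have "(\<Sum>j\<in>T (Suc n) i. f j) = f i + (\<Sum>j\<in>T n (2*i) \<union> T n (2*i+1). f j)"
    using T_notin[OF assms, of n] by simp
  also have "(\<Sum>j\<in>T n (2*i) \<union> T n (2*i+1). f j) = (\<Sum>j\<in>T n (2*i). f j) + (\<Sum>j\<in>T n (2*i+1). f j)"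
    using T_disj[OF assms, of n] by (simp add: sum.union_disjoint)
  finally show ?thesis by (simp add: add.assoc)
qed

lemma LB: assumes c: "\<forall>j\<in>V. 0 \<le> c j"
  shows "lv n i \<Longrightarrow> int (card {j\<in>T n i. P j \<le> qf c j}) \<le> Phi (infl c i + (\<Sum>j\<in>T n i. c j))"
proof (induction n arbitrary: i)
  case 0 then show ?case using Phi_nonneg by simp
next
  case (Suc n)
  have i1: "1 \<le> i" using lv_ge1[OF Suc.prems] .
  have l1: "lv n (2*i)" and l2: "lv n (2*i+1)" using lv_child[OF Suc.prems] by auto
  define S1 where "S1 = (\<Sum>j\<in>T n (2*i). c j)"
  define S2 where "S2 = (\<Sum>j\<in>T n (2*i+1). c j)"
  have S1: "0 \<le> S1" unfolding S1_def using T_V[OF l1] c by (intro sum_nonneg) auto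
  have S2: "0 \<le> S2" unfolding S2_def using T_V[OF l2] c by (intro sum_nonneg) auto
  have sum: "(\<Sum>j\<in>T (Suc n) i. c j) = c i + S1 + S2" unfolding S1_def S2_def by (rule T_split_sum[OF i1])
  have qi: "qf c i = min (P i) (infl c i + c i)" using qf_infl[OF i1 lv_le'[OF Suc.prems]] .
  have Pi: "P i = 2^(n+3)" using P_lv[OF Suc.prems] .
  have q0: "0 \<le> qf c i" using qf_nonneg[OF c] .
  show ?case
  proof (cases "P i \<le> qf c i")
    case True
    have "card {j\<in>T (Suc n) i. P j \<le> qf c j} \<le> card (T (Suc n) i)" by (rule card_mono) auto
    also have "\<dots> = 2^(Suc n) - 1" using T_card[OF i1] .
    finally have "int (card {j\<in>T (Suc n) i. P j \<le> qf c j}) \<le> int (2^(Suc n) - 1)" by (rule of_nat_mono)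
    also have "int (2^(Suc n) - 1) = 2 * 2^n - 1" using one_le_power[of "2::nat" "Suc n"] by (simp add: of_nat_diff)
    also have "\<dots> = Phi (2^(n+3))" using Phi_pow[of n] by simp
    also have "\<dots> \<le> Phi (infl c i + (\<Sum>j\<in>T (Suc n) i. c j))"
      using True qi Pi S1 S2 unfolding sum by (intro Phi_mono) linarith
    finally show ?thesis .
  next
    case False
    then have qi': "qf c i = infl c i + c i" using qi by linarith
    have eq: "{j\<in>T (Suc n) i. P j \<le> qf c j} = {j\<in>T n (2*i). P j \<le> qf c j} \<union> {j\<in>T n (2*i+1). P j \<le> qf c j}"
      using False by auto
    have "card {j\<in>T (Suc n) i. P j \<le> qf c j} = card {j\<in>T n (2*i). P j \<le> qf c j} + card {j\<in>T n (2*i+1). P j \<le> qf c j}"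
      unfolding eq using T_disj[OF i1, of n] by (intro card_Un_disjoint) auto
    then have "int (card {j\<in>T (Suc n) i. P j \<le> qf c j}) \<le> Phi (qf c i / 2 + S1) + Phi (qf c i / 2 + S2)"
      using Suc.IH[OF l1] Suc.IH[OF l2] unfolding S1_def S2_def infl_child by simp
    also have "\<dots> \<le> Phi (qf c i / 2 + S1 + (qf c i / 2 + S2))"
      using q0 S1 S2 by (intro Phi_superadd) auto
    also have "qf c i / 2 + S1 + (qf c i / 2 + S2) = infl c i + (\<Sum>j\<in>T (Suc n) i. c j)"
      unfolding sum qi' by simp
    finally show ?thesis .
  qed
qed

lemma UB: "lv n i \<Longrightarrow> 2*m \<le> 2^n \<Longrightarrow> \<exists>c0. (\<forall>j. j \<notin> T n i \<longrightarrow> c0 j = 0) \<and> (\<forall>j. 0 \<le> c0 j)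
   \<and> (\<Sum>j\<in>T n i. c0 j) = 8 * real m
   \<and> (\<forall>c. (\<forall>j\<in>V. 0 \<le> c j) \<longrightarrow> (\<forall>j\<in>T n i. c0 j \<le> c j) \<longrightarrow> G m \<le> int (card {j\<in>T n i. P j \<le> qf c j}))"
proof (induction n arbitrary: i m)
  case 0
  then have "m = 0" by simp
  then show ?case by (rule_tac x="\<lambda>_. 0" in exI) simp
next
  case (Suc n)
  have i1: "1 \<le> i" using lv_ge1[OF Suc.prems(1)] .
  have l1: "lv n (2*i)" and l2: "lv n (2*i+1)" using lv_child[OF Suc.prems(1)] by auto
  have Pi: "P i = 2^(n+3)" using P_lv[OF Suc.prems(1)] .
  have mle: "m \<le> 2^n" using Suc.prems(2) by simp
  show ?case
  proof (cases "m = 2^n")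
    case True
    define c0 where "c0 = (\<lambda>j. if j = i then 8 * 2^n else (0::real))"
    have sum: "(\<Sum>j\<in>T (Suc n) i. c0 j) = 8 * real m" unfolding c0_def True by simp
    have main: "G m \<le> int (card {j\<in>T (Suc n) i. P j \<le> qf c j})"
      if c: "\<forall>j\<in>V. 0 \<le> c j" and ge: "\<forall>j\<in>T (Suc n) i. c0 j \<le> c j" for c
    proof -
      have "8 * 2^n \<le> c i" using ge unfolding c0_def by auto
      moreover have "(8::real) * 2^n = 2^(n+3)" by (simp add: power_add)
      ultimately have "P i \<le> infl c i + c i" using Pi infl_nonneg[OF c, of i] by linarith
      then have "qf c i = P i" using qf_infl[OF i1 lv_le'[OF Suc.prems(1)]] by simp
      then have "{j\<in>T (Suc n) i. P j \<le> qf c j} = T (Suc n) i"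
        using allsolv[OF c Suc.prems(1)] by auto
      then have "int (card {j\<in>T (Suc n) i. P j \<le> qf c j}) = 2 * 2^n - 1"
        using T_card[OF i1, of "Suc n"] one_le_power[of "2::nat" n] by simp
      then show ?thesis using G_pow[of n] True by simp
    qed
    show ?thesis
      apply (rule exI[of _ c0])
      using sum main by (auto simp: c0_def)
  next
    case False
    then have mlt: "m < 2^n" using mle by simp
    define m1 where "m1 = min m (2^n div 2)"
    define m2 where "m2 = m - m1"
    have b1: "2*m1 \<le> 2^n" unfolding m1_def by auto
    have Gm: "G m = G m1 + G m2" and b2: "2*m2 \<le> 2^n"
    proof -
      have "(G m = G m1 + G m2) \<and> 2*m2 \<le> 2^n"
      proof (cases "m \<le> 2^n div 2")
        case True then show ?thesis unfolding m1_def m2_def by simp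
      next
        case False
        then obtain n' where n': "n = Suc n'" using mlt by (cases n) auto
        then have h: "(2::nat)^n div 2 = 2^n'" by simp
        then have "m1 = 2^n'" "m = 2^n' + m2" "m2 < 2^n'" using False mlt n' unfolding m1_def m2_def by auto
        then show ?thesis using G_pow_add[of m2 n'] n' by simp
      qed
      then show "G m = G m1 + G m2" "2*m2 \<le> 2^n" by auto
    qed
    obtain c1 where c1: "\<forall>j. j \<notin> T n (2*i) \<longrightarrow> c1 j = 0" "\<forall>j. 0 \<le> c1 j"
       "(\<Sum>j\<in>T n (2*i). c1 j) = 8 * real m1"
       "\<forall>c. (\<forall>j\<in>V. 0 \<le> c j) \<longrightarrow> (\<forall>j\<in>T n (2*i). c1 j \<le> c j) \<longrightarrow> G m1 \<le> int (card {j\<in>T n (2*i). P j \<le> qf c j})"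
      using Suc.IH[OF l1 b1] by blast
    obtain c2 where c2: "\<forall>j. j \<notin> T n (2*i+1) \<longrightarrow> c2 j = 0" "\<forall>j. 0 \<le> c2 j"
       "(\<Sum>j\<in>T n (2*i+1). c2 j) = 8 * real m2"
       "\<forall>c. (\<forall>j\<in>V. 0 \<le> c j) \<longrightarrow> (\<forall>j\<in>T n (2*i+1). c2 j \<le> c j) \<longrightarrow> G m2 \<le> int (card {j\<in>T n (2*i+1). P j \<le> qf c j})"
      using Suc.IH[OF l2 b2] by blast
    define c0 where "c0 = (\<lambda>j. c1 j + c2 j)"
    have dj: "T n (2*i) \<inter> T n (2*i+1) = {}" using T_disj[OF i1] .
    have supp: "\<forall>j. j \<notin> T (Suc n) i \<longrightarrow> c0 j = 0" unfolding c0_def using c1(1) c2(1) by auto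
    have s1: "(\<Sum>j\<in>T (Suc n) i. c1 j) = (\<Sum>j\<in>T n (2*i). c1 j)"
      using c1(1) by (intro sum.mono_neutral_right) auto
    have s2: "(\<Sum>j\<in>T (Suc n) i. c2 j) = (\<Sum>j\<in>T n (2*i+1). c2 j)"
      using c2(1) by (intro sum.mono_neutral_right) auto
    have sum: "(\<Sum>j\<in>T (Suc n) i. c0 j) = 8 * real m"
      unfolding c0_def sum.distrib s1 s2 c1(3) c2(3) using Gm m2_def m1_def by simp
    have main: "G m \<le> int (card {j\<in>T (Suc n) i. P j \<le> qf c j})"
      if c: "\<forall>j\<in>V. 0 \<le> c j" and ge: "\<forall>j\<in>T (Suc n) i. c0 j \<le> c j" for c
    proof -
      have g1: "\<forall>j\<in>T n (2*i). c1 j \<le> c j"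
      proof
        fix j assume j: "j \<in> T n (2*i)"
        then have "c2 j = 0" using c2(1) dj by auto
        moreover have "j \<in> T (Suc n) i" using j by simp
        ultimately show "c1 j \<le> c j" using ge unfolding c0_def by fastforce
      qed
      have g2: "\<forall>j\<in>T n (2*i+1). c2 j \<le> c j"
      proof
        fix j assume j: "j \<in> T n (2*i+1)"
        then have "c1 j = 0" using c1(1) dj by auto
        moreover have "j \<in> T (Suc n) i" using j by simp
        ultimately show "c2 j \<le> c j" using ge unfolding c0_def by fastforce
      qed
      have "card {j\<in>T n (2*i). P j \<le> qf c j} + card {j\<in>T n (2*i+1). P j \<le> qf c j}
            = card ({j\<in>T n (2*i). P j \<le> qf c j} \<union> {j\<in>T n (2*i+1). P j \<le> qf c j})"
        using dj by (intro card_Un_disjoint[symmetric]) auto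
      also have "\<dots> \<le> card {j\<in>T (Suc n) i. P j \<le> qf c j}" by (intro card_mono) auto
      finally show ?thesis using c1(4) c2(4) c g1 g2 Gm by fastforce
    qed
    show ?thesis
      apply (rule exI[of _ c0])
      using supp sum main c1(2) c2(2) by (auto simp: c0_def intro: add_nonneg_nonneg)
  qed
qed



lemma ND: assumes c: "\<forall>j\<in>V. 0 \<le> c j"
  shows "tree_Nd c = 511 - card {j\<in>T 9 1. P j \<le> qf c j}"
proof -
  have "{i\<in>V. qf c i < P i} = T 9 1 - {j\<in>T 9 1. P j \<le> qf c j}"
  proof (intro set_eqI iffI)
    fix i assume i: "i \<in> {i\<in>V. qf c i < P i}"
    then have "i < 512" using qf_nonneg[OF c, of i] by (auto simp: P_eq split: if_splits)
    then show "i \<in> T 9 1 - {j\<in>T 9 1. P j \<le> qf c j}" using i unfolding T91 by (auto simp: V_iff)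
  next
    fix i assume "i \<in> T 9 1 - {j\<in>T 9 1. P j \<le> qf c j}"
    then show "i \<in> {i\<in>V. qf c i < P i}" unfolding T91 by (auto simp: V_iff)
  qed
  then have "tree_Nd c = card (T 9 1 - {j\<in>T 9 1. P j \<le> qf c j})"
    unfolding tree_Nd_def num_defaults_def cv_eq by simp
  also have "\<dots> = card (T 9 1) - card {j\<in>T 9 1. P j \<le> qf c j}"
    by (intro card_Diff_subset) auto
  also have "card (T 9 1) = 511" using T_card[of 1 9] by simp
  finally show ?thesis .
qed

lemma lv91: "lv 9 1" by (simp add: lv_def)

lemma card_solv_le: "card {j\<in>T 9 1. P j \<le> qf c j} \<le> 511"
proof -
  have "card {j\<in>T 9 1. P j \<le> qf c j} \<le> card (T 9 1)" by (intro card_mono) auto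
  then show ?thesis using T_card[of 1 9] by simp
qed

lemma LOW: assumes "c \<in> admissible_injections C" shows "511 - Phi C \<le> int (tree_Nd c)"
proof -
  have c: "\<forall>j\<in>V. 0 \<le> c j" and sC: "(\<Sum>j\<in>V. c j) = C" using assms by (auto simp: admissible_injections_def)
  have "int (card {j\<in>T 9 1. P j \<le> qf c j}) \<le> Phi (infl c 1 + (\<Sum>j\<in>T 9 1. c j))"
    using LB[OF c lv91] .
  also have "infl c 1 = 0" by (simp add: infl_def)
  also have "Phi (0 + (\<Sum>j\<in>T 9 1. c j)) \<le> Phi C"
  proof (intro Phi_mono)
    have "(\<Sum>j\<in>T 9 1. c j) \<le> (\<Sum>j\<in>V. c j)"
      using T_V[OF lv91] c by (intro sum_mono2) (auto simp: tree_nodes_def)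
    then show "0 + (\<Sum>j\<in>T 9 1. c j) \<le> C" using sC by simp
  qed
  finally have "int (card {j\<in>T 9 1. P j \<le> qf c j}) \<le> Phi C" .
  then show ?thesis unfolding ND[OF c] using card_solv_le[of c] by (simp add: of_nat_diff)
qed

lemma ACH: assumes "m \<le> 256" "0 \<le> r"
  shows "\<exists>c\<in>admissible_injections (8 * real m + r). int (tree_Nd c) \<le> 511 - G m"
proof -
  have "2*m \<le> 2^9" using assms by simp
  from UB[OF lv91 this] obtain c0 where c0: "\<forall>j. j \<notin> T 9 1 \<longrightarrow> c0 j = 0" "\<forall>j. 0 \<le> c0 j"
       "(\<Sum>j\<in>T 9 1. c0 j) = 8 * real m"
       "\<forall>c. (\<forall>j\<in>V. 0 \<le> c j) \<longrightarrow> (\<forall>j\<in>T 9 1. c0 j \<le> c j) \<longrightarrow> G m \<le> int (card {j\<in>T 9 1. P j \<le> qf c j})"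
    by blast
  define c where "c = (\<lambda>j. c0 j + (if j = 1023 then r else 0))"
  have cn: "\<forall>j\<in>V. 0 \<le> c j" unfolding c_def using c0(2) assms(2) by (simp add: add_nonneg_nonneg)
  have n1023: "1023 \<notin> T 9 1" unfolding T91 by simp
  have "(\<Sum>j\<in>V. c0 j) = (\<Sum>j\<in>T 9 1. c0 j)"
    using T_V[OF lv91] c0(1) by (intro sum.mono_neutral_right) (auto simp: tree_nodes_def)
  moreover have "(\<Sum>j\<in>V. (if j = 1023 then r else 0)) = r" by (simp add: tree_nodes_def)
  ultimately have sum: "(\<Sum>j\<in>V. c j) = 8 * real m + r" unfolding c_def sum.distrib using c0(3) by simp
  have adm: "c \<in> admissible_injections (8 * real m + r)"
    unfolding admissible_injections_def using cn sum by simp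
  have "\<forall>j\<in>T 9 1. c0 j \<le> c j" unfolding c_def using n1023 by auto
  then have "G m \<le> int (card {j\<in>T 9 1. P j \<le> qf c j})" using c0(4) cn by blast
  then have "int (tree_Nd c) \<le> 511 - G m"
    unfolding ND[OF cn] using card_solv_le[of c] by (simp add: of_nat_diff)
  then show ?thesis using adm by blast
qed

lemma div_Suc_pow: "(m::nat) div (2 * 2^k) = (m div 2) div 2^k"
  by (simp add: div_mult2_eq)

lemma bits_sum: "m < 2^n \<Longrightarrow> (\<Sum>k<n. int (m div 2^k mod 2) * 2^k) = int m"
proof (induction n arbitrary: m)
  case 0 then show ?case by simp
next
  case (Suc n)
  have "m div 2 < 2^n" using Suc.prems by auto
  then have "(\<Sum>k<n. int ((m div 2) div 2^k mod 2) * 2^k) = int (m div 2)" by (rule Suc.IH)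
  moreover have "(\<Sum>k<n. int (m div 2^(Suc k) mod 2) * 2^(Suc k)) = 2 * (\<Sum>k<n. int ((m div 2) div 2^k mod 2) * 2^k)"
    by (simp add: div_Suc_pow sum_distrib_left mult_ac)
  ultimately have "(\<Sum>k<n. int (m div 2^(Suc k) mod 2) * 2^(Suc k)) = 2 * int (m div 2)" by simp
  moreover have "int m = int (m mod 2) + 2 * int (m div 2)"
    by (metis mod_mult_div_eq of_nat_add of_nat_mult of_nat_numeral)
  ultimately show ?case unfolding sum.lessThan_Suc_shift by simp
qed

lemma bits_pc: "m < 2^n \<Longrightarrow> (\<Sum>k<n. int (m div 2^k mod 2)) = int (pc m)"
proof (induction n arbitrary: m)
  case 0 then show ?case by simp
next
  case (Suc n)
  have "m div 2 < 2^n" using Suc.prems by auto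
  then have "(\<Sum>k<n. int ((m div 2) div 2^k mod 2)) = int (pc (m div 2))" by (rule Suc.IH)
  then show ?case unfolding sum.lessThan_Suc_shift using pc_eq[of m] by (simp add: div_Suc_pow)
qed

lemma bits_G: assumes "m < 2^n" shows "(\<Sum>k<n. int (m div 2^k mod 2) * (2^(k+1) - 1)) = G m"
proof -
  have "(\<Sum>k<n. int (m div 2^k mod 2) * (2^(k+1) - 1)) = 2 * (\<Sum>k<n. int (m div 2^k mod 2) * 2^k) - (\<Sum>k<n. int (m div 2^k mod 2))"
    by (simp add: sum_distrib_left sum_subtractf algebra_simps)
  also have "\<dots> = G m" using bits_sum[OF assms] bits_pc[OF assms] by (simp add: G_def)
  finally show ?thesis .
qed

lemma final_val: assumes "C < (2048::nat)"
  shows "(\<Sum>u=3..10. int ((C div 2^u) mod 2) * (2^(u-2) - 1)) = G (C div 8)"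
proof -
  have "(\<Sum>u=3..10. int ((C div 2^u) mod 2) * (2^(u-2) - 1)) = (\<Sum>u=0+3..7+3. int ((C div 2^u) mod 2) * (2^(u-2) - 1))"
    by simp
  also have "\<dots> = (\<Sum>k=0..7. int ((C div 2^(k+3)) mod 2) * (2^(k+3-2) - 1))"
    by (rule sum.shift_bounds_cl_nat_ivl)
  also have "\<dots> = (\<Sum>k<8. int (((C div 8) div 2^k) mod 2) * (2^(k+1) - 1))"
  proof -
    have "{0..7::nat} = {..<8}" by auto
    moreover have "\<And>k. C div 2^(k+3) = (C div 8) div 2^k"
      by (simp add: div_mult2_eq power_add mult.commute)
    moreover have "\<And>k::nat. k+3-2 = k+1" by simp
    ultimately show ?thesis by simp
  qed
  also have "\<dots> = G (C div 8)" using assms by (intro bits_G) simp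
  finally show ?thesis .
qed

theorem mainTheorem3:
  shows "(\<forall>C::real. C \<ge> 2048 \<longrightarrow>
            min_defaults_is C 0)
       \<and> (\<forall>C::nat. C < 2048 \<longrightarrow>
            min_defaults_is (real C)
              (nat (511 - (\<Sum>u=3..10. int ((C div 2^u) mod 2) * (2^(u-2) - 1)))))"
proof (intro conjI allI impI)
  fix C :: real assume C: "C \<ge> 2048"
  have r: "0 \<le> C - 2048" using C by simp
  obtain c where c: "c \<in> admissible_injections (8 * real 256 + (C - 2048))" "int (tree_Nd c) \<le> 511 - G 256"
    using ACH[OF _ r, of 256] by blast
  have "G 256 = 511" using G_pow[of 8] by simp
  then have "tree_Nd c = 0" using c(2) by simp
  moreover have "8 * real 256 + (C - 2048) = C" by simp
  ultimately have "c \<in> admissible_injections C \<and> tree_Nd c = 0" using c(1) by metis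
  then show "min_defaults_is C 0" unfolding min_defaults_is_def by blast
next
  fix C :: nat assume C: "C < 2048"
  define m where "m = C div 8"
  have m: "m \<le> 256" using C by (simp add: m_def)
  have e: "8 * m + C mod 8 = C" unfolding m_def by simp
  have Cm: "8 * real m + real (C mod 8) = real C" using arg_cong[OF e, of real] by simp
  have r: "0 \<le> real (C mod 8)" by simp
  obtain c where c0: "c \<in> admissible_injections (8 * real m + real (C mod 8))" "int (tree_Nd c) \<le> 511 - G m"
    using ACH[OF m r] by blast
  have c1: "c \<in> admissible_injections (real C)" using c0(1) unfolding Cm .
  have Phi: "Phi (real C) = G m"
  proof -
    have "\<lfloor>real C / 8\<rfloor> = int (C div 8)" using floor_divide_of_nat_eq[of C 8] by simp
    then show ?thesis unfolding Phi_def m_def by simp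
  qed
  have low: "511 - G m \<le> int (tree_Nd c')" if "c' \<in> admissible_injections (real C)" for c'
    using LOW[OF that] unfolding Phi .
  have v: "(\<Sum>u=3..10. int ((C div 2^u) mod 2) * (2^(u-2) - 1)) = G m"
    using final_val[OF C] unfolding m_def .
  have eqc: "int (tree_Nd c) = 511 - G m" using c0(2) low[OF c1] by linarith
  have "tree_Nd c = nat (511 - G m)" using eqc by linarith
  moreover have "\<forall>c'\<in>admissible_injections (real C). nat (511 - G m) \<le> tree_Nd c'"
    using low by (metis nat_le_iff)
  ultimately show "min_defaults_is (real C) (nat (511 - (\<Sum>u=3..10. int ((C div 2^u) mod 2) * (2^(u-2) - 1))))"
    unfolding min_defaults_is_def v using c1 by blast
qed


end
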